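(* Let $\mathcal M=(N,\mathcal I)$ be a loopless matroid with rank function $r$ that contains $3h$ pairwise disjoint bases for some integer $h\ge1$, and let $S\subseteq N$ be a random set containing each element independently with probability $1/2$. Then $$\Pr\Big[|\mathrm{span}(D(S,h))\setminus S|\le \tfrac{|N|}{12}\Big]\le\exp\Big(-\tfrac{|N|}{144}\Big)\quad\text{and}\quad \Pr\Big[r(D(S,h))\le\tfrac{r(N)}{8}\Big]\le\exp\Big(-\tfrac{r(N)}{48}\Big).$$
   Context: $D(S,\lambda)=D_{\mathcal M}(S,\lambda)$ is the unique inclusion-wise maximal set among the maximizers of $|U|-\lambda r(U)$ over $U\subseteq S$. $\mathrm{span}(A)=\{e\in N: r(A\cup\{e\})=r(A)\}$. *)

theory Defs
  imports Complex_Main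
begin

definition matroid :: "'a set \<Rightarrow> ('a set \<Rightarrow> bool) \<Rightarrow> bool" where
  "matroid N indep \<longleftrightarrow>
     finite N \<and> indep {} \<and>
     (\<forall>I. indep I \<longrightarrow> I \<subseteq> N) \<and>
     (\<forall>I J. indep J \<and> I \<subseteq> J \<longrightarrow> indep I) \<and>
     (\<forall>I J. indep I \<and> indep J \<and> card I < card J \<longrightarrow> (\<exists>e\<in>J - I. indep (insert e I)))"

definition loopless :: "'a set \<Rightarrow> ('a set \<Rightarrow> bool) \<Rightarrow> bool" where
  "loopless N indep \<longleftrightarrow> (\<forall>e\<in>N. indep {e})"

definition mbasis :: "('a set \<Rightarrow> bool) \<Rightarrow> 'a set \<Rightarrow> bool" where
  "mbasis indep B \<longleftrightarrow> indep B \<and> (\<forall>I. indep I \<and> B \<subseteq> I \<longrightarrow> I = B)"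

definition mrank :: "('a set \<Rightarrow> bool) \<Rightarrow> 'a set \<Rightarrow> nat" where
  "mrank indep A = Max (card ` {I. I \<subseteq> A \<and> indep I})"

definition mspan :: "'a set \<Rightarrow> ('a set \<Rightarrow> bool) \<Rightarrow> 'a set \<Rightarrow> 'a set" where
  "mspan N indep A = {e\<in>N. mrank indep (A \<union> {e}) = mrank indep A}"

definition maximizers :: "('a set \<Rightarrow> bool) \<Rightarrow> 'a set \<Rightarrow> real \<Rightarrow> 'a set set" where
  "maximizers indep S lam =
     {U. U \<subseteq> S \<and> (\<forall>V. V \<subseteq> S \<longrightarrow>
        real (card V) - lam * real (mrank indep V) \<le> real (card U) - lam * real (mrank indep U))}"

definition Dset :: "('a set \<Rightarrow> bool) \<Rightarrow> 'a set \<Rightarrow> real \<Rightarrow> 'a set" where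
  "Dset indep S lam =
     (THE U. U \<in> maximizers indep S lam \<and> (\<forall>V\<in>maximizers indep S lam. U \<subseteq> V \<longrightarrow> V = U))"

text \<open>Probability of an event for S a uniformly random subset of N
  (each element independently with probability 1/2).\<close>
definition prob_half :: "'a set \<Rightarrow> ('a set \<Rightarrow> bool) \<Rightarrow> real" where
  "prob_half N P = real (card {S. S \<subseteq> N \<and> P S}) / 2 ^ card N"

end

theory Submission
  imports Defs
begin

locale matr =
  fixes N :: "'a set" and indep :: "'a set \<Rightarrow> bool"
  assumes mat: "matroid N indep"
begin

abbreviation r where "r \<equiv> mrank indep"

lemma finN: "finite N" using mat unfolding matroid_def by blast
lemma indep_sub: "indep I \<Longrightarrow> I \<subseteq> N" using mat unfolding matroid_def by blast
lemma indep_empty: "indep {}" using mat unfolding matroid_def by blast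
lemma indep_down: "indep J \<Longrightarrow> I \<subseteq> J \<Longrightarrow> indep I" using mat unfolding matroid_def by blast
lemma indep_aug: "indep I \<Longrightarrow> indep J \<Longrightarrow> card I < card J \<Longrightarrow> \<exists>e\<in>J - I. indep (insert e I)"
  using mat unfolding matroid_def by blast
lemma indep_fin: "indep I \<Longrightarrow> finite I" using indep_sub finN finite_subset by blast

lemma fin_ind: "finite {I. I \<subseteq> A \<and> indep I}"
  by (rule finite_subset[of _ "Pow N"]) (auto dest: indep_sub simp: finN)

lemma rank_ge: "I \<subseteq> A \<Longrightarrow> indep I \<Longrightarrow> card I \<le> r A"
  unfolding mrank_def by (rule Max_ge) (use fin_ind in auto)

lemma rank_ex: "\<exists>I. I \<subseteq> A \<and> indep I \<and> card I = r A"
proof -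
  have "r A \<in> card ` {I. I \<subseteq> A \<and> indep I}"
    unfolding mrank_def by (rule Max_in) (use fin_ind indep_empty in auto)
  then show ?thesis by auto
qed

lemma rank_mono: "A \<subseteq> B \<Longrightarrow> r A \<le> r B"
proof -
  assume AB: "A \<subseteq> B"
  obtain I where I: "I \<subseteq> A" "indep I" "card I = r A" using rank_ex by blast
  have "I \<subseteq> B" using I(1) AB by (rule order_trans)
  then have "card I \<le> r B" using I(2) by (rule rank_ge)
  then show ?thesis using I(3) by simp
qed

lemma rank_le_card: "finite A \<Longrightarrow> r A \<le> card A"
proof -
  assume fA: "finite A"
  obtain I where I: "I \<subseteq> A" "indep I" "card I = r A" using rank_ex by blast
  have "card I \<le> card A" using fA I(1) by (rule card_mono)
  then show ?thesis using I(3) by simp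
qed

lemma rank_empty: "r {} = 0"
  using rank_le_card[of "{}"] by simp

lemma extend_aux: "\<forall>I. indep I \<and> I \<subseteq> X \<and> r X - card I = d \<longrightarrow>
   (\<exists>J. I \<subseteq> J \<and> J \<subseteq> X \<and> indep J \<and> card J = r X)"
proof (induction d)
  case 0
  show ?case
  proof (intro allI impI)
    fix I assume a: "indep I \<and> I \<subseteq> X \<and> r X - card I = 0"
    have "card I \<le> r X" using a rank_ge by blast
    then have "card I = r X" using a by linarith
    then show "\<exists>J. I \<subseteq> J \<and> J \<subseteq> X \<and> indep J \<and> card J = r X" using a by blast
  qed
next
  case (Suc d)
  show ?case
  proof (intro allI impI)
    fix I assume a: "indep I \<and> I \<subseteq> X \<and> r X - card I = Suc d"
    obtain K where K: "K \<subseteq> X" "indep K" "card K = r X" using rank_ex by blast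
    have "card I < card K" using a K by linarith
    then obtain e where e: "e \<in> K - I" "indep (insert e I)" using indep_aug[of I K] a K(2) by blast
    have "card (insert e I) = Suc (card I)" using e a indep_fin by auto
    then have c: "indep (insert e I) \<and> insert e I \<subseteq> X \<and> r X - card (insert e I) = d"
      using a e K by auto
    obtain J where "insert e I \<subseteq> J \<and> J \<subseteq> X \<and> indep J \<and> card J = r X"
      using Suc.IH c by blast
    then show "\<exists>J. I \<subseteq> J \<and> J \<subseteq> X \<and> indep J \<and> card J = r X" by blast
  qed
qed

lemma extend: "indep I \<Longrightarrow> I \<subseteq> X \<Longrightarrow> \<exists>J. I \<subseteq> J \<and> J \<subseteq> X \<and> indep J \<and> card J = r X"
  using extend_aux by blast

lemma submod: "r (A \<union> B) + r (A \<inter> B) \<le> r A + r B"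
proof -
  obtain I where I: "I \<subseteq> A \<inter> B" "indep I" "card I = r (A \<inter> B)" using rank_ex by blast
  obtain J where J: "I \<subseteq> J" "J \<subseteq> A \<union> B" "indep J" "card J = r (A \<union> B)"
    using extend[of I "A \<union> B"] I by blast
  have fJ: "finite J" using J indep_fin by blast
  have "card (J \<inter> A) \<le> r A" using J by (intro rank_ge) (auto intro: indep_down)
  moreover have "card (J \<inter> B) \<le> r B" using J by (intro rank_ge) (auto intro: indep_down)
  moreover have "card (J \<inter> A) + card (J \<inter> B) = card ((J \<inter> A) \<union> (J \<inter> B)) + card ((J \<inter> A) \<inter> (J \<inter> B))"
    using fJ by (intro card_Un_Int) auto
  moreover have "(J \<inter> A) \<union> (J \<inter> B) = J" using J by auto
  ultimately have "card J + card ((J \<inter> A) \<inter> (J \<inter> B)) \<le> r A + r B" by simp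
  moreover have "card I \<le> card ((J \<inter> A) \<inter> (J \<inter> B))"
    using I J fJ by (intro card_mono) auto
  ultimately show ?thesis using I J by linarith
qed

lemma span_mono: "e \<in> mspan N indep A \<Longrightarrow> A \<subseteq> B \<Longrightarrow> e \<in> mspan N indep B"
proof -
  assume e: "e \<in> mspan N indep A" and AB: "A \<subseteq> B"
  have eN: "e \<in> N" and ra: "r (A \<union> {e}) = r A" using e unfolding mspan_def by auto
  have "B \<union> (A \<union> {e}) = B \<union> {e}" using AB by auto
  then have "r (B \<union> {e}) + r (B \<inter> (A \<union> {e})) \<le> r B + r (A \<union> {e})"
    using submod[of B "A \<union> {e}"] by simp
  moreover have "r A \<le> r (B \<inter> (A \<union> {e}))" using AB by (intro rank_mono) auto
  moreover have "r B \<le> r (B \<union> {e})" by (intro rank_mono) auto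
  ultimately have "r (B \<union> {e}) = r B" using ra by linarith
  then show ?thesis using eN unfolding mspan_def by auto
qed

lemma basis_card: "mbasis indep B \<Longrightarrow> card B = r N"
proof -
  assume b: "mbasis indep B"
  have iB: "indep B" and mx: "\<forall>I. indep I \<and> B \<subseteq> I \<longrightarrow> I = B" using b unfolding mbasis_def by auto
  have le: "card B \<le> r N" using iB indep_sub rank_ge by blast
  show ?thesis
  proof (rule ccontr)
    assume "card B \<noteq> r N"
    then have lt: "card B < r N" using le by simp
    obtain K where K: "K \<subseteq> N" "indep K" "card K = r N" using rank_ex by blast
    obtain e where e: "e \<in> K - B" "indep (insert e B)" using indep_aug[OF iB K(2)] lt K by auto
    have "insert e B = B" using mx e(2) by blast
    then show False using e(1) by blast
  qed
qed

end

locale matrh = matr +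
  fixes h :: nat
  assumes h1: "h \<ge> 1"
begin

definition fv :: "'a set \<Rightarrow> real" where
  "fv V = real (card V) - real h * real (r V)"

abbreviation mx where "mx S \<equiv> maximizers indep S (real h)"
abbreviation D where "D S \<equiv> Dset indep S (real h)"

lemma mx_iff: "U \<in> mx S \<longleftrightarrow> U \<subseteq> S \<and> (\<forall>V. V \<subseteq> S \<longrightarrow> fv V \<le> fv U)"
  unfolding maximizers_def fv_def by auto

lemma supermod: "finite A \<Longrightarrow> finite B \<Longrightarrow> fv A + fv B \<le> fv (A \<union> B) + fv (A \<inter> B)"
proof -
  assume fA: "finite A" and fB: "finite B"
  have c: "real (card A) + real (card B) = real (card (A \<union> B)) + real (card (A \<inter> B))"
    using card_Un_Int[OF fA fB] by (metis of_nat_add)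
  have "real (r (A \<union> B)) + real (r (A \<inter> B)) \<le> real (r A) + real (r B)"
    using submod[of A B] by (metis of_nat_add of_nat_le_iff)
  then have "real h * (real (r (A \<union> B)) + real (r (A \<inter> B))) \<le> real h * (real (r A) + real (r B))"
    by (intro mult_left_mono) auto
  then show ?thesis using c unfolding fv_def by (simp add: algebra_simps)
qed

lemma fin_sub: "S \<subseteq> N \<Longrightarrow> finite S" using finN finite_subset by blast

lemma mx_un: "S \<subseteq> N \<Longrightarrow> A \<in> mx S \<Longrightarrow> B \<in> mx S \<Longrightarrow> A \<union> B \<in> mx S"
proof -
  assume S: "S \<subseteq> N" and A: "A \<in> mx S" and B: "B \<in> mx S"
  have AS: "A \<subseteq> S" and BS: "B \<subseteq> S" using A B mx_iff by auto
  have "fv A + fv B \<le> fv (A \<union> B) + fv (A \<inter> B)"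
    using AS BS S by (intro supermod) (auto intro: fin_sub)
  moreover have "fv (A \<inter> B) \<le> fv B" using B AS mx_iff[of B S] by (meson Int_lower1 order_trans)
  ultimately have le: "fv A \<le> fv (A \<union> B)" by linarith
  have "\<forall>V. V \<subseteq> S \<longrightarrow> fv V \<le> fv (A \<union> B)"
    using A le unfolding mx_iff by (meson order_trans)
  then show ?thesis unfolding mx_iff using AS BS by simp
qed

lemma mx_ne: "S \<subseteq> N \<Longrightarrow> mx S \<noteq> {}"
proof -
  assume S: "S \<subseteq> N"
  have fP: "finite (fv ` Pow S)" using fin_sub[OF S] by simp
  have "Max (fv ` Pow S) \<in> fv ` Pow S" by (rule Max_in) (use fP in auto)
  then obtain U where U: "U \<in> Pow S" "fv U = Max (fv ` Pow S)" by auto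
  have "\<forall>V. V \<subseteq> S \<longrightarrow> fv V \<le> fv U" using U fP by (auto intro: Max_ge)
  then have "U \<in> mx S" using U mx_iff by auto
  then show ?thesis by auto
qed

lemma mx_fin: "S \<subseteq> N \<Longrightarrow> finite (mx S)"
  by (rule finite_subset[of _ "Pow S"]) (auto simp: mx_iff fin_sub)

lemma Un_mx_aux: "finite F \<Longrightarrow> F \<noteq> {} \<Longrightarrow> S \<subseteq> N \<Longrightarrow> F \<subseteq> mx S \<Longrightarrow> \<Union>F \<in> mx S"
proof (induction F rule: finite_ne_induct)
  case (singleton x) then show ?case by simp
next
  case (insert x F) then show ?case using mx_un by simp
qed

lemma Un_mx: "S \<subseteq> N \<Longrightarrow> \<Union>(mx S) \<in> mx S"
  using Un_mx_aux[of "mx S" S] mx_fin mx_ne by blast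

lemma D_eq: "S \<subseteq> N \<Longrightarrow> D S = \<Union>(mx S)"
  unfolding Dset_def
proof (rule the_equality)
  assume S: "S \<subseteq> N"
  show "\<Union>(mx S) \<in> mx S \<and> (\<forall>V\<in>mx S. \<Union>(mx S) \<subseteq> V \<longrightarrow> V = \<Union>(mx S))"
    using Un_mx[OF S] by auto
  fix U assume "U \<in> mx S \<and> (\<forall>V\<in>mx S. U \<subseteq> V \<longrightarrow> V = U)"
  then show "U = \<Union>(mx S)" using Un_mx[OF S] by blast
qed

lemma D_mx: "S \<subseteq> N \<Longrightarrow> D S \<in> mx S" using D_eq Un_mx by simp
lemma D_max: "S \<subseteq> N \<Longrightarrow> U \<in> mx S \<Longrightarrow> U \<subseteq> D S" using D_eq by auto
lemma D_sub: "S \<subseteq> N \<Longrightarrow> D S \<subseteq> S" using D_mx[of S] unfolding mx_iff by simp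

lemma D_mono: "S \<subseteq> S' \<Longrightarrow> S' \<subseteq> N \<Longrightarrow> D S \<subseteq> D S'"
proof -
  assume SS: "S \<subseteq> S'" and S': "S' \<subseteq> N"
  have S: "S \<subseteq> N" using SS S' by auto
  define A where "A = D S"
  define B where "B = D S'"
  have A: "A \<in> mx S" and B: "B \<in> mx S'" using D_mx S S' A_def B_def by auto
  have AS: "A \<subseteq> S" and BS: "B \<subseteq> S'" using A B mx_iff by auto
  have "fv A + fv B \<le> fv (A \<union> B) + fv (A \<inter> B)"
    using AS BS S S' by (intro supermod) (meson fin_sub order_trans)+
  moreover have "fv (A \<inter> B) \<le> fv A" using A AS mx_iff[of A S] by (meson Int_lower1 order_trans)
  ultimately have le: "fv B \<le> fv (A \<union> B)" by linarith
  have "\<forall>V. V \<subseteq> S' \<longrightarrow> fv V \<le> fv (A \<union> B)"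
    using B le unfolding mx_iff by (meson order_trans)
  then have "A \<union> B \<in> mx S'" unfolding mx_iff using AS BS SS by simp
  then have "A \<union> B \<subseteq> B" using D_max[OF S'] B_def by blast
  then show ?thesis using A_def B_def by auto
qed

definition Mv :: "'a set \<Rightarrow> real" where "Mv S = fv (D S)"

lemma Mv_ge: "S \<subseteq> N \<Longrightarrow> V \<subseteq> S \<Longrightarrow> fv V \<le> Mv S"
  using D_mx[of S] unfolding mx_iff Mv_def by simp

lemma Mv_empty: "Mv {} = 0"
proof -
  have "D {} = {}" using D_sub[of "{}"] by auto
  then show ?thesis unfolding Mv_def fv_def using rank_empty by simp
qed

lemma fv_int: "fv V = of_int (int (card V) - int h * int (r V))"
  by (simp add: fv_def)

lemma L1: "S \<subseteq> N \<Longrightarrow> e \<in> N \<Longrightarrow> Mv (insert e S) \<le> Mv S + 1"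
proof -
  assume S: "S \<subseteq> N" and e: "e \<in> N"
  have iS: "insert e S \<subseteq> N" using S e by auto
  define D' where "D' = D (insert e S)"
  have D'sub: "D' \<subseteq> insert e S" using D_sub[OF iS] D'_def by simp
  define Y where "Y = D' - {e}"
  have YS: "Y \<subseteq> S" using D'sub Y_def by auto
  have fD': "finite D'" using D'sub iS fin_sub by blast
  have fY: "finite Y" using fD' Y_def by auto
  have "D' \<subseteq> insert e Y" using Y_def by auto
  then have "card D' \<le> card (insert e Y)" using fY by (intro card_mono) auto
  also have "\<dots> \<le> card Y + 1" using fY by (simp add: card_insert_if)
  finally have "card D' \<le> card Y + 1" .
  moreover have "r Y \<le> r D'" using Y_def rank_mono by auto
  ultimately have "fv D' \<le> fv Y + 1" unfolding fv_def
  proof -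
    assume a: "card D' \<le> card Y + 1" "r Y \<le> r D'"
    have "real h * real (r Y) \<le> real h * real (r D')" using a(2) by (intro mult_left_mono) auto
    moreover have "real (card D') \<le> real (card Y) + 1" using a(1) by (metis of_nat_1 of_nat_add of_nat_le_iff)
    ultimately show "real (card D') - real h * real (r D') \<le> real (card Y) - real h * real (r Y) + 1" by linarith
  qed
  moreover have "fv Y \<le> Mv S" using Mv_ge[OF S YS] .
  ultimately show ?thesis unfolding Mv_def D'_def by linarith
qed

lemma L2: "S \<subseteq> N \<Longrightarrow> e \<in> N \<Longrightarrow> e \<notin> mspan N indep (D S) \<Longrightarrow> Mv (insert e S) \<le> Mv S"
proof (rule ccontr)
  assume S: "S \<subseteq> N" and e: "e \<in> N" and ns: "e \<notin> mspan N indep (D S)"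
     and c: "\<not> Mv (insert e S) \<le> Mv S"
  have iS: "insert e S \<subseteq> N" using S e by auto
  define D' where "D' = D (insert e S)"
  have D'sub: "D' \<subseteq> insert e S" using D_sub[OF iS] D'_def by simp
  have fD': "finite D'" using D'sub iS fin_sub by blast
  have lt: "Mv S < fv D'" using c unfolding Mv_def D'_def by simp
  show False
  proof (cases "e \<in> D'")
    case False
    then have "D' \<subseteq> S" using D'sub by auto
    then have "fv D' \<le> Mv S" using Mv_ge[OF S] by simp
    then show False using lt by simp
  next
    case True
    define Y where "Y = D' - {e}"
    have YS: "Y \<subseteq> S" using D'sub Y_def by auto
    have D'Y: "D' = insert e Y" and eY: "e \<notin> Y" using True Y_def by auto
    have fY: "finite Y" using fD' Y_def by auto
    have cD: "card D' = card Y + 1" using D'Y eY fY by simp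
    have rm: "r Y \<le> r D'" unfolding D'Y by (rule rank_mono) auto
    show False
    proof (cases "r Y < r D'")
      case True
      then have "real (r Y) + 1 \<le> real (r D')" by linarith
      then have "real h * (real (r Y) + 1) \<le> real h * real (r D')" by (intro mult_left_mono) auto
      then have "real h * real (r Y) \<le> real h * real (r D') - real h" by (simp add: algebra_simps)
      then have "fv D' \<le> fv Y" using cD h1 unfolding fv_def by simp
      then show False using Mv_ge[OF S YS] lt by linarith
    next
      case False
      then have rr: "r Y = r D'" using rm by simp
      then have espan: "e \<in> mspan N indep Y" using e D'Y unfolding mspan_def by simp
      have fvY: "fv Y = fv D' - 1" using cD rr unfolding fv_def by simp
      have "Mv S \<le> fv Y"
      proof -
        have "Mv S = of_int (int (card (D S)) - int h * int (r (D S)))" using Mv_def fv_int by simp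
        moreover have "fv D' = of_int (int (card D') - int h * int (r D'))" using fv_int by simp
        ultimately obtain a b where ab: "Mv S = of_int a" "fv D' = of_int b" by blast
        then have "a < b" using lt by simp
        then have "a \<le> b - 1" by simp
        then have "real_of_int a \<le> real_of_int b - 1" by linarith
        then show ?thesis using ab fvY by simp
      qed
      then have "\<forall>V. V \<subseteq> S \<longrightarrow> fv V \<le> fv Y" using Mv_ge[OF S] by (meson order_trans)
      then have "Y \<in> mx S" unfolding mx_iff using YS by simp
      then have "Y \<subseteq> D S" using D_max[OF S] by blast
      then show False using span_mono[OF espan] ns by blast
    qed
  qed
qed

end

locale matrs = matrh +
  fixes idx :: "'a \<Rightarrow> nat"
  assumes bij: "bij_betw idx N {0..<card N}"
begin

definition pre where "pre S e = {x\<in>S. idx x < idx e}"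
definition Z where "Z S e = (e \<in> mspan N indep (D (pre S e)))"
definition sig where "sig S = {e\<in>N. (e \<in> S) \<noteq> Z S e}"

lemma idx_lt: "e \<in> N \<Longrightarrow> idx e < card N" using bij unfolding bij_betw_def by auto
lemma idx_inj: "x \<in> N \<Longrightarrow> y \<in> N \<Longrightarrow> idx x = idx y \<Longrightarrow> x = y"
  using bij unfolding bij_betw_def inj_on_def by auto

lemma sig_inj: "inj_on sig (Pow N)"
proof (rule inj_onI)
  fix S S' assume S: "S \<in> Pow N" and S': "S' \<in> Pow N" and e: "sig S = sig S'"
  have "\<forall>x\<in>N. idx x < m \<longrightarrow> (x \<in> S \<longleftrightarrow> x \<in> S')" for m
  proof (induction m)
    case 0 then show ?case by simp
  next
    case (Suc m)
    show ?case
    proof (intro ballI impI)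
      fix x assume x: "x \<in> N" "idx x < Suc m"
      show "x \<in> S \<longleftrightarrow> x \<in> S'"
      proof (cases "idx x < m")
        case True then show ?thesis using Suc.IH x by blast
      next
        case False
        then have im: "idx x = m" using x by simp
        have "pre S x = pre S' x" unfolding pre_def using Suc.IH S S' im by auto
        then have "Z S x = Z S' x" unfolding Z_def by simp
        moreover have "(x \<in> sig S) = (x \<in> sig S')" using e by simp
        ultimately show ?thesis unfolding sig_def using x by auto
      qed
    qed
  qed
  then have "\<forall>x\<in>N. x \<in> S \<longleftrightarrow> x \<in> S'" using idx_lt by blast
  then show "S = S'" using S S' by auto
qed

lemma W_aux:
  assumes S: "S \<subseteq> N"
  shows "real (card {e\<in>S. idx e < m \<and> \<not> Z S e}) \<le> real (card {e\<in>S. idx e < m}) - Mv {e\<in>S. idx e < m}"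
proof (induction m)
  case 0 then show ?case using Mv_empty by simp
next
  case (Suc m)
  define P where "P = {e\<in>S. idx e < m}"
  define P' where "P' = {e\<in>S. idx e < Suc m}"
  define W where "W = {e\<in>S. idx e < m \<and> \<not> Z S e}"
  define W' where "W' = {e\<in>S. idx e < Suc m \<and> \<not> Z S e}"
  have fS: "finite S" using S fin_sub by blast
  have PN: "P \<subseteq> N" using S P_def by auto
  have IH: "real (card W) \<le> real (card P) - Mv P" using Suc.IH P_def W_def by simp
  show ?case
  proof (cases "\<exists>e\<in>S. idx e = m")
    case False
    then have "P' = P" "W' = W" unfolding P_def P'_def W_def W'_def using less_Suc_eq by auto
    then show ?thesis using IH P'_def W'_def by simp
  next
    case True
    then obtain e where e: "e \<in> S" "idx e = m" by blast
    have eN: "e \<in> N" using e S by auto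
    have uq: "x = e" if "x \<in> S" "idx x = m" for x
    proof -
      have xN: "x \<in> N" using that(1) S by blast
      have "idx x = idx e" using that(2) e(2) by simp
      then show ?thesis using idx_inj[OF xN eN] by simp
    qed
    have PP: "P' = insert e P"
    proof
      show "P' \<subseteq> insert e P"
      proof
        fix x assume "x \<in> P'"
        then have x: "x \<in> S" "idx x < Suc m" by (simp_all add: P'_def)
        show "x \<in> insert e P"
        proof (cases "idx x = m")
          case True then show ?thesis using uq[OF x(1)] by simp
        next
          case False then show ?thesis using x by (simp add: P_def)
        qed
      qed
      show "insert e P \<subseteq> P'" using e by (auto simp: P_def P'_def)
    qed
    have eP: "e \<notin> P" using e P_def by auto
    have fP: "finite P" using fS P_def by auto
    have cP: "card P' = card P + 1" using PP eP fP by simp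
    have pre: "pre S e = P" unfolding pre_def P_def using e by simp
    show ?thesis
    proof (cases "Z S e")
      case True
      then have "W' = W" unfolding W_def W'_def using uq by (auto simp: less_Suc_eq)
      moreover have "Mv P' \<le> Mv P + 1" using L1[OF PN eN] PP by simp
      ultimately show ?thesis using IH cP P'_def W'_def by simp
    next
      case False
      have WW: "W' = insert e W"
      proof
        show "W' \<subseteq> insert e W"
        proof
          fix x assume "x \<in> W'"
          then have x: "x \<in> S" "idx x < Suc m" "\<not> Z S x" by (simp_all add: W'_def)
          show "x \<in> insert e W"
          proof (cases "idx x = m")
            case True then show ?thesis using uq[OF x(1)] by simp
          next
            case False then show ?thesis using x by (simp add: W_def)
          qed
        qed
        show "insert e W \<subseteq> W'" using e False by (auto simp: W_def W'_def)
      qed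
      have eW: "e \<notin> W" using e W_def by auto
      have fW: "finite W" using fS W_def by auto
      have cW: "card W' = card W + 1" using WW eW fW by simp
      have "e \<notin> mspan N indep (D P)" using False pre unfolding Z_def by simp
      then have "Mv P' \<le> Mv P" using L2[OF PN eN] PP by simp
      then show ?thesis using IH cP cW P'_def W'_def by simp
    qed
  qed
qed

lemma W_bound:
  assumes S: "S \<subseteq> N"
  shows "real (card {e\<in>S. \<not> Z S e}) \<le> real h * real (r N)"
proof -
  have e1: "{e\<in>S. idx e < card N} = S" using S idx_lt by auto
  have e2: "{e\<in>S. idx e < card N \<and> \<not> Z S e} = {e\<in>S. \<not> Z S e}" using S idx_lt by auto
  have "real (card {e\<in>S. \<not> Z S e}) \<le> real (card S) - Mv S"
    using W_aux[OF S, of "card N"] e1 e2 by simp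
  also have "\<dots> \<le> real h * real (r S)" using Mv_ge[OF S, of S] unfolding fv_def by simp
  also have "\<dots> \<le> real h * real (r N)" using rank_mono[OF S] by (intro mult_left_mono) auto
  finally show ?thesis .
qed

lemma X_sub:
  assumes S: "S \<subseteq> N"
  shows "{e\<in>N - S. Z S e} \<subseteq> mspan N indep (D S) - S"
proof
  fix e assume e: "e \<in> {e\<in>N - S. Z S e}"
  have "pre S e \<subseteq> S" unfolding pre_def by auto
  then have "D (pre S e) \<subseteq> D S" using D_mono S by blast
  then show "e \<in> mspan N indep (D S) - S" using e span_mono unfolding Z_def by blast
qed

lemma sig_card:
  assumes S: "S \<subseteq> N"
  shows "real (card (sig S)) \<le> real (card (mspan N indep (D S) - S)) + real h * real (r N)"
proof -
  have eq: "sig S = {e\<in>N - S. Z S e} \<union> {e\<in>S. \<not> Z S e}" unfolding sig_def using S by auto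
  have f1: "finite (mspan N indep (D S) - S)" using finN unfolding mspan_def by auto
  have "card (sig S) \<le> card {e\<in>N - S. Z S e} + card {e\<in>S. \<not> Z S e}"
    unfolding eq by (rule card_Un_le)
  moreover have "card {e\<in>N - S. Z S e} \<le> card (mspan N indep (D S) - S)"
    using X_sub[OF S] f1 by (rule card_mono[rotated])
  ultimately have "card (sig S) \<le> card (mspan N indep (D S) - S) + card {e\<in>S. \<not> Z S e}" by linarith
  then have "real (card (sig S)) \<le> real (card (mspan N indep (D S) - S) + card {e\<in>S. \<not> Z S e})"
    by (simp only: of_nat_le_iff)
  then have "real (card (sig S)) \<le> real (card (mspan N indep (D S) - S)) + real (card {e\<in>S. \<not> Z S e})"
    by simp
  then show ?thesis using W_bound[OF S] by linarith
qed

end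

context matrh
begin

lemma part2_incl:
  assumes S: "S \<subseteq> N"
    and Bb: "\<forall>i<3*h. mbasis indep (B i)"
    and ev: "8 * real (r (D S)) \<le> real (r N)"
  shows "12 * real (card (S \<inter> (\<Union>i\<in>{..<3*h}. B i))) \<le> 15 * real h * real (r N)"
proof -
  define Dd where "Dd = D S"
  define U where "U = (\<Union>i\<in>{..<3*h}. B i)"
  have fS: "finite S" using S fin_sub by blast
  have DdS: "Dd \<subseteq> S" using D_sub[OF S] Dd_def by simp
  have fD: "finite Dd" using DdS fS finite_subset by blast
  have "S \<inter> U \<subseteq> (\<Union>i\<in>{..<3*h}. Dd \<inter> B i) \<union> (S - Dd)" unfolding U_def by auto
  then have "card (S \<inter> U) \<le> card ((\<Union>i\<in>{..<3*h}. Dd \<inter> B i) \<union> (S - Dd))"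
    using fS fD by (intro card_mono) auto
  also have "\<dots> \<le> card (\<Union>i\<in>{..<3*h}. Dd \<inter> B i) + card (S - Dd)" by (rule card_Un_le)
  also have "card (\<Union>i\<in>{..<3*h}. Dd \<inter> B i) \<le> (\<Sum>i\<in>{..<3*h}. card (Dd \<inter> B i))" by (rule card_UN_le) simp
  also have "\<dots> \<le> (\<Sum>i\<in>{..<3*h}. r Dd)"
  proof (rule sum_mono)
    fix i assume "i \<in> {..<3*h}"
    then have "indep (B i)" using Bb unfolding mbasis_def by auto
    then have "indep (Dd \<inter> B i)" using indep_down[of "B i" "Dd \<inter> B i"] by blast
    then show "card (Dd \<inter> B i) \<le> r Dd" by (intro rank_ge) auto
  qed
  also have "\<dots> = 3 * h * r Dd" by simp
  finally have c1: "card (S \<inter> U) \<le> 3 * h * r Dd + card (S - Dd)" by simp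
  have "fv S \<le> fv Dd" using Mv_ge[OF S, of S] Mv_def Dd_def by simp
  moreover have "card (S - Dd) = card S - card Dd" using DdS fD by (simp add: card_Diff_subset)
  moreover have "card Dd \<le> card S" using DdS fS card_mono by blast
  ultimately have "real (card (S - Dd)) \<le> real h * real (r S) - real h * real (r Dd)"
    unfolding fv_def by (simp add: of_nat_diff)
  moreover have "real h * real (r S) \<le> real h * real (r N)" using rank_mono[OF S] by (intro mult_left_mono) auto
  moreover have "real h * (8 * real (r Dd)) \<le> real h * real (r N)" using ev Dd_def by (intro mult_left_mono) auto
  moreover have "real (card (S \<inter> U)) \<le> 3 * real h * real (r Dd) + real (card (S - Dd))"
  proof -
    have "real (card (S \<inter> U)) \<le> real (3 * h * r Dd + card (S - Dd))" using c1 by (simp only: of_nat_le_iff)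
    then show ?thesis by simp
  qed
  ultimately have "12 * real (card (S \<inter> U)) \<le> 15 * (real h * real (r N))"
    by (simp only: mult.assoc[symmetric] mult.commute[of _ 8] mult.commute[of 3 "real h"])
  then show ?thesis unfolding U_def by (simp only: mult.assoc)
qed

end

lemma num_ineq: "(7/5::real)^5 * (6/7)^12 \<le> exp (-1/12)"
proof -
  have "(7/5::real)^5 * (6/7)^12 \<le> 1 + (-1/12)" by (simp add: power_numeral_reduce)
  also have "\<dots> \<le> exp (-1/12)" by (rule exp_ge_add_one_self)
  finally show ?thesis .
qed

lemma tail_sum:
  fixes u :: nat
  shows "(\<Sum>i\<in>{i. i \<le> u \<and> 12 * i \<le> 5 * u}. real (u choose i)) \<le> 2 ^ u * exp (- real u / 144)"
proof -
  define a where "a = 5 * u div 12"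
  define I where "I = {i. i \<le> u \<and> 12 * i \<le> 5 * u}"
  have aI: "i \<le> a" if "i \<in> I" for i using that unfolding I_def a_def by auto
  have "(\<Sum>i\<in>I. real (u choose i)) \<le> (\<Sum>i\<in>I. real (u choose i) * (5/7)^i * (7/5)^a)"
  proof (rule sum_mono)
    fix i assume i: "i \<in> I"
    have "(7/5::real)^i \<le> (7/5)^a" using aI[OF i] by (intro power_increasing) auto
    then have "(5/7::real)^i * (7/5)^i \<le> (5/7::real)^i * (7/5)^a"
      by (intro mult_left_mono) auto
    moreover have "(5/7::real)^i * (7/5)^i = 1" by (simp add: power_mult_distrib[symmetric])
    ultimately have "1 \<le> (5/7::real)^i * (7/5)^a" by simp
    then have "real (u choose i) * 1 \<le> real (u choose i) * ((5/7)^i * (7/5)^a)"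
      by (intro mult_left_mono) auto
    then show "real (u choose i) \<le> real (u choose i) * (5/7)^i * (7/5)^a"
      by (simp add: mult.assoc)
  qed
  also have "\<dots> \<le> (\<Sum>i\<le>u. real (u choose i) * (5/7)^i * (7/5)^a)"
    by (rule sum_mono2) (auto simp: I_def)
  also have "\<dots> = (7/5)^a * (\<Sum>i\<le>u. real (u choose i) * (5/7)^i * 1^(u-i))"
    by (simp add: sum_distrib_left algebra_simps)
  also have "\<dots> = (7/5)^a * (5/7 + 1)^u" using binomial_ring[of "5/7::real" 1 u] by simp
  also have "\<dots> = 2^u * ((7/5)^a * (6/7)^u)"
  proof -
    have "(5/7 + 1::real)^u = 2^u * (6/7)^u" by (simp add: power_mult_distrib[symmetric])
    then show ?thesis by simp
  qed
  also have "\<dots> \<le> 2^u * exp (- real u / 144)"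
  proof (rule mult_left_mono)
    define x where "x = (7/5::real)^a * (6/7)^u"
    have x0: "0 \<le> x" unfolding x_def by simp
    have "x ^ Suc 11 = (7/5)^(12*a) * (6/7)^(12*u)"
      unfolding x_def by (simp add: power_mult_distrib power_mult[symmetric] mult.commute)
    also have "\<dots> \<le> (7/5)^(5*u) * (6/7)^(12*u)"
      using a_def by (intro mult_right_mono power_increasing) auto
    also have "\<dots> = ((7/5)^5 * (6/7)^12)^u"
      by (simp add: power_mult power_mult_distrib)
    also have "\<dots> \<le> (exp (-1/12))^u"
      using num_ineq by (intro power_mono) auto
    also have "\<dots> = (exp (- real u / 144)) ^ Suc 11"
      by (simp add: exp_of_nat_mult[symmetric] flip: exp_of_nat_mult)
    finally have "x ^ Suc 11 \<le> (exp (- real u / 144)) ^ Suc 11" .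
    then show "x \<le> exp (- real u / 144)" by (rule power_le_imp_le_base) simp
  qed simp
  finally show ?thesis unfolding I_def .
qed

lemma tail:
  assumes "finite U"
  shows "real (card {R. R \<subseteq> U \<and> 12 * card R \<le> 5 * card U}) \<le> 2 ^ card U * exp (- real (card U) / 144)"
proof -
  define I where "I = {i. i \<le> card U \<and> 12 * i \<le> 5 * card U}"
  have eq: "{R. R \<subseteq> U \<and> 12 * card R \<le> 5 * card U} = (\<Union>i\<in>I. {R. R \<subseteq> U \<and> card R = i})"
    unfolding I_def using assms by (auto intro: card_mono)
  have "card (\<Union>i\<in>I. {R. R \<subseteq> U \<and> card R = i}) = (\<Sum>i\<in>I. card {R. R \<subseteq> U \<and> card R = i})"
    by (rule card_UN_disjoint) (auto simp: I_def intro: finite_subset[of _ "Pow U"] assms)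
  also have "\<dots> = (\<Sum>i\<in>I. card U choose i)" using n_subsets[OF assms] by simp
  finally have "real (card {R. R \<subseteq> U \<and> 12 * card R \<le> 5 * card U}) = (\<Sum>i\<in>I. real (card U choose i))"
    using eq by simp
  then show ?thesis using tail_sum[of "card U"] unfolding I_def by simp
qed

lemma count_restrict:
  assumes fN: "finite N" and UN: "U \<subseteq> N"
  shows "card {S. S \<subseteq> N \<and> P (S \<inter> U)} = card {R. R \<subseteq> U \<and> P R} * 2 ^ (card N - card U)"
proof -
  define A where "A = {R. R \<subseteq> U \<and> P R} \<times> Pow (N - U)"
  have inj: "inj_on (\<lambda>(R, Q). R \<union> Q) A"
  proof (rule inj_onI)
    fix x y assume x: "x \<in> A" and y: "y \<in> A" and e: "(\<lambda>(R, Q). R \<union> Q) x = (\<lambda>(R, Q). R \<union> Q) y"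
    obtain R Q R' Q' where xy: "x = (R, Q)" "y = (R', Q')" by (cases x, cases y) auto
    have "R \<subseteq> U" "Q \<subseteq> N - U" "R' \<subseteq> U" "Q' \<subseteq> N - U" using x y xy A_def by auto
    moreover have "R \<union> Q = R' \<union> Q'" using e xy by simp
    ultimately have "R = R'" "Q = Q'" by blast+
    then show "x = y" using xy by simp
  qed
  have img: "(\<lambda>(R, Q). R \<union> Q) ` A = {S. S \<subseteq> N \<and> P (S \<inter> U)}"
  proof
    show "(\<lambda>(R, Q). R \<union> Q) ` A \<subseteq> {S. S \<subseteq> N \<and> P (S \<inter> U)}"
    proof
      fix S assume "S \<in> (\<lambda>(R, Q). R \<union> Q) ` A"
      then obtain R Q where "R \<subseteq> U" "P R" "Q \<subseteq> N - U" "S = R \<union> Q" unfolding A_def by auto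
      moreover then have "S \<inter> U = R" by blast
      ultimately show "S \<in> {S. S \<subseteq> N \<and> P (S \<inter> U)}" using UN by auto
    qed
    show "{S. S \<subseteq> N \<and> P (S \<inter> U)} \<subseteq> (\<lambda>(R, Q). R \<union> Q) ` A"
    proof
      fix S assume S: "S \<in> {S. S \<subseteq> N \<and> P (S \<inter> U)}"
      then have "(S \<inter> U, S - U) \<in> A" unfolding A_def by auto
      moreover have "S = (\<lambda>(R, Q). R \<union> Q) (S \<inter> U, S - U)" by auto
      ultimately show "S \<in> (\<lambda>(R, Q). R \<union> Q) ` A" by blast
    qed
  qed
  have "card {S. S \<subseteq> N \<and> P (S \<inter> U)} = card A" using card_image[OF inj] img by simp
  also have "\<dots> = card {R. R \<subseteq> U \<and> P R} * 2 ^ (card N - card U)"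
    unfolding A_def using fN UN by (simp add: card_cartesian_product card_Pow card_Diff_subset finite_subset)
  finally show ?thesis .
qed

theorem theorem5p1:
  fixes N :: "'a set" and indep :: "'a set \<Rightarrow> bool" and h :: nat
  assumes "matroid N indep"
    and "loopless N indep"
    and "h \<ge> 1"
    and "\<exists>B :: nat \<Rightarrow> 'a set. (\<forall>i<3*h. mbasis indep (B i)) \<and>
           (\<forall>i<3*h. \<forall>j<3*h. i \<noteq> j \<longrightarrow> B i \<inter> B j = {})"
  shows "prob_half N (\<lambda>S. real (card (mspan N indep (Dset indep S (real h)) - S)) \<le> real (card N) / 12)
           \<le> exp (- real (card N) / 144)
       \<and> prob_half N (\<lambda>S. real (mrank indep (Dset indep S (real h))) \<le> real (mrank indep N) / 8)
           \<le> exp (- real (mrank indep N) / 48)"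
proof -
  obtain B where Bb: "\<forall>i<3*h. mbasis indep (B i)"
    and Bd: "\<forall>i<3*h. \<forall>j<3*h. i \<noteq> j \<longrightarrow> B i \<inter> B j = {}" using assms(4) by blast
  interpret matrh N indep h using assms(1,3) by unfold_locales auto
  obtain idx where idx: "bij_betw idx N {0..<card N}" using ex_bij_betw_finite_nat finN by blast
  interpret matrs N indep h idx using idx by unfold_locales
  define k where "k = r N"
  define n where "n = card N"
  define U where "U = (\<Union>i\<in>{..<3*h}. B i)"
  have BN: "B i \<subseteq> N" "card (B i) = k" if "i < 3*h" for i
    using Bb that indep_sub basis_card k_def unfolding mbasis_def by auto
  have UN: "U \<subseteq> N" using BN U_def by auto
  have cU: "card U = 3 * h * k"
  proof -
    have "card U = (\<Sum>i\<in>{..<3*h}. card (B i))" unfolding U_def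
      using BN Bd finN by (intro card_UN_disjoint) (auto intro: finite_subset)
    also have "\<dots> = (\<Sum>i\<in>{..<3*h}. k)" using BN by simp
    finally show ?thesis by simp
  qed
  have "card U \<le> n" using UN finN card_mono n_def by blast
  then have un: "3 * h * k \<le> n" using cU by simp
  then have "real (3 * h * k) \<le> real n" by (simp only: of_nat_le_iff)
  then have unr: "3 * real h * real k \<le> real n" by simp
  have p1: "prob_half N (\<lambda>S. real (card (mspan N indep (Dset indep S (real h)) - S)) \<le> real (card N) / 12)
           \<le> exp (- real (card N) / 144)"
  proof -
    define E where "E = {S. S \<subseteq> N \<and> real (card (mspan N indep (D S) - S)) \<le> real (card N) / 12}"
    define T where "T = {R. R \<subseteq> N \<and> 12 * card R \<le> 5 * card N}"
    have "sig ` E \<subseteq> T"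
    proof
      fix R assume "R \<in> sig ` E"
      then obtain S where S: "S \<in> E" "R = sig S" by blast
      have SN: "S \<subseteq> N" using S E_def by auto
      have "real (card R) \<le> real n / 12 + real h * real k"
        using sig_card[OF SN] S E_def k_def n_def by simp
      then have "12 * real (card R) \<le> 5 * real n" using unr by linarith
      then have "real (12 * card R) \<le> real (5 * n)" by simp
      then have "12 * card R \<le> 5 * n" by (simp only: of_nat_le_iff)
      moreover have "R \<subseteq> N" using S sig_def by auto
      ultimately show "R \<in> T" using T_def n_def by simp
    qed
    moreover have "inj_on sig E" using sig_inj by (rule inj_on_subset) (auto simp: E_def)
    moreover have "finite T" unfolding T_def using finN by (auto intro: finite_subset[of _ "Pow N"])
    ultimately have "card E \<le> card T" using card_inj_on_le by blast
    then have "real (card E) \<le> 2 ^ card N * exp (- real (card N) / 144)"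
      using tail[OF finN] T_def by (meson of_nat_le_iff order_trans)
    then show ?thesis unfolding prob_half_def E_def by (simp add: divide_le_eq mult.commute)
  qed
  have p2: "prob_half N (\<lambda>S. real (mrank indep (Dset indep S (real h))) \<le> real (mrank indep N) / 8)
           \<le> exp (- real (mrank indep N) / 48)"
  proof -
    define E where "E = {S. S \<subseteq> N \<and> real (r (D S)) \<le> real (r N) / 8}"
    define T where "T = {S. S \<subseteq> N \<and> 12 * card (S \<inter> U) \<le> 5 * card U}"
    have "E \<subseteq> T"
    proof
      fix S assume "S \<in> E"
      then have S: "S \<subseteq> N" "8 * real (r (D S)) \<le> real (r N)" unfolding E_def by auto
      have "12 * real (card (S \<inter> U)) \<le> 15 * real h * real k"
        using part2_incl[OF S(1) Bb S(2)] U_def k_def by simp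
      also have "\<dots> = 5 * real (card U)" using cU by simp
      finally have "real (12 * card (S \<inter> U)) \<le> real (5 * card U)" by simp
      then have "12 * card (S \<inter> U) \<le> 5 * card U" by (simp only: of_nat_le_iff)
      then show "S \<in> T" using S T_def by simp
    qed
    moreover have "finite T" unfolding T_def using finN by (auto intro: finite_subset[of _ "Pow N"])
    ultimately have "card E \<le> card T" by (rule card_mono[rotated])
    also have "card T = card {R. R \<subseteq> U \<and> 12 * card R \<le> 5 * card U} * 2 ^ (card N - card U)"
      unfolding T_def by (rule count_restrict[OF finN UN])
    finally have "real (card E) \<le> real (card {R. R \<subseteq> U \<and> 12 * card R \<le> 5 * card U} * 2 ^ (card N - card U))"
      by (simp only: of_nat_le_iff)
    then have "real (card E) \<le> real (card {R. R \<subseteq> U \<and> 12 * card R \<le> 5 * card U}) * 2 ^ (card N - card U)"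
      by simp
    also have "\<dots> \<le> 2 ^ card U * exp (- real (card U) / 144) * 2 ^ (card N - card U)"
      using tail[of U] finN UN finite_subset by (intro mult_right_mono) auto
    also have "\<dots> = 2 ^ card N * exp (- real (card U) / 144)"
    proof -
      have "card U \<le> card N" using UN finN card_mono by blast
      then have "(2::real) ^ card U * 2 ^ (card N - card U) = 2 ^ card N" by (simp flip: power_add)
      then show ?thesis by (simp add: algebra_simps)
    qed
    also have "\<dots> \<le> 2 ^ card N * exp (- real k / 48)"
    proof -
      have "1 * real k \<le> real h * real k" using assms(3) by (intro mult_right_mono) auto
      then have "real k \<le> real h * real k" by simp
      then have "- real (card U) / 144 \<le> - real k / 48" using cU by simp
      then show ?thesis by simp
    qed
    finally show ?thesis unfolding prob_half_def E_def k_def by (simp add: divide_le_eq mult.commute)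
  qed
  show ?thesis using p1 p2 by blast
qed

end
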